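(* Let $\mathcal{M}=(E_t,\mathcal{T})$ be a simple oriented matroid, let $k$ be an integer with $1\le k\le|\mathcal{T}|/2$, and put $h=\lfloor(|\mathcal{T}|-k+1)/2\rfloor$ and $\mathcal{P}=\bigcup_{e\in E_t}\binom{\mathcal{T}^+_e}{h}$. Then \[ \mathring{\kappa}^{\ast}_k(\mathcal{M})=\binom{|\mathcal{T}|/2}{k}2^k+\sum_{\substack{G\in\boldsymbol{\mathcal{E}}(\mathcal{P}):\\ 0<|G|\le|\mathcal{T}|-k}}\mu_{\boldsymbol{\mathcal{E}}}(\hat0,G)\sum_{j=0}^{k}\binom{|G\cup-G|-|G|}{j}\binom{\tfrac12(|\mathcal{T}|-|G\cup-G|)}{k-j}2^{k-j}. \]
   Context: Let $t\ge 1$ and $E_t=\{1,\dots,t\}$. $\mathcal{M}=(E_t,\mathcal{T})$ is a simple oriented matroid with set of topes $\mathcal{T}\subseteq\{+,-\}^{E_t}$, closed under negation. For $e\in E_t$, $\mathcal{T}^+_e=\{T\in\mathcal{T}: T(e)=+\}$. For $G\subseteq\mathcal{T}$, $-G=\{-T:T\in G\}$. $\binom{X}{j}$ denotes the family of $j$-element subsets of $X$. For a family $\mathcal{G}$ of subsets of $\mathcal{T}$, $\boldsymbol{\mathcal{E}}(\mathcal{G})$ is the lattice consisting of all unions $\bigcup_{F\in\mathcal{F}}F$ over nonempty subfamilies $\mathcal{F}\subseteq\mathcal{G}$, ordered by inclusion, together with a new least element $\hat0$ interpreted as the empty set (with $|\hat0|=0$); $\mu_{\boldsymbol{\mathcal{E}}}$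 is its Möbius function. A tope committee for $\mathcal{M}$ is a subset $\mathcal{K}^{\ast}\subset\mathcal{T}$ with $|\{T\in\mathcal{K}^{\ast}: T(e)=+\}|>\tfrac12|\mathcal{K}^{\ast}|$ for every $e\in E_t$; $\mathring{\kappa}^{\ast}_k(\mathcal{M})$ is the number of tope committees of cardinality $k$ containing no pair of opposite topes. Binomial coefficients $\binom{n}{j}$ are $0$ when $j>n$ or $j<0$. *)

theory Defs
  imports Main
begin

(* Sign vectors on the ground set E_t = {1..t}: functions nat => int with values in
   {-1,0,1} (meaning -,0,+), equal to 0 outside {1..t}. *)

definition sign_vector :: "nat \<Rightarrow> (nat \<Rightarrow> int) \<Rightarrow> bool" where
  "sign_vector t X \<longleftrightarrow> (\<forall>e. X e \<in> {-1,0,1}) \<and> (\<forall>e. e \<notin> {1..t} \<longrightarrow> X e = 0)"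

definition sv_neg :: "(nat \<Rightarrow> int) \<Rightarrow> (nat \<Rightarrow> int)" where
  "sv_neg X = (\<lambda>e. - X e)"

definition sv_comp :: "(nat \<Rightarrow> int) \<Rightarrow> (nat \<Rightarrow> int) \<Rightarrow> (nat \<Rightarrow> int)" where
  "sv_comp X Y = (\<lambda>e. if X e \<noteq> 0 then X e else Y e)"

definition sv_sep :: "(nat \<Rightarrow> int) \<Rightarrow> (nat \<Rightarrow> int) \<Rightarrow> nat set" where
  "sv_sep X Y = {e. X e \<noteq> 0 \<and> X e = - Y e}"

definition sv_conf_le :: "(nat \<Rightarrow> int) \<Rightarrow> (nat \<Rightarrow> int) \<Rightarrow> bool" where
  "sv_conf_le X Y \<longleftrightarrow> (\<forall>e. X e \<noteq> 0 \<longrightarrow> X e = Y e)"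

(* Covector axioms of an oriented matroid on E_t = {1..t} *)
definition oriented_matroid :: "nat \<Rightarrow> (nat \<Rightarrow> int) set \<Rightarrow> bool" where
  "oriented_matroid t L \<longleftrightarrow>
     (\<forall>X\<in>L. sign_vector t X) \<and>
     (\<lambda>e. 0) \<in> L \<and>
     (\<forall>X\<in>L. sv_neg X \<in> L) \<and>
     (\<forall>X\<in>L. \<forall>Y\<in>L. sv_comp X Y \<in> L) \<and>
     (\<forall>X\<in>L. \<forall>Y\<in>L. \<forall>e\<in>sv_sep X Y. \<exists>Z\<in>L. Z e = 0 \<and>
          (\<forall>f. f \<notin> sv_sep X Y \<longrightarrow> Z f = sv_comp X Y f))"

definition simple_om :: "nat \<Rightarrow> (nat \<Rightarrow> int) set \<Rightarrow> bool" where
  "simple_om t L \<longleftrightarrow>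
     (\<forall>e\<in>{1..t}. \<exists>X\<in>L. X e \<noteq> 0) \<and>
     (\<forall>e\<in>{1..t}. \<forall>f\<in>{1..t}. e \<noteq> f \<longrightarrow>
        \<not> (\<forall>X\<in>L. X e = X f) \<and> \<not> (\<forall>X\<in>L. X e = - X f))"

definition topes :: "(nat \<Rightarrow> int) set \<Rightarrow> (nat \<Rightarrow> int) set" where
  "topes L = {T\<in>L. \<forall>Y\<in>L. sv_conf_le T Y \<longrightarrow> Y = T}"

definition simple_om_topes :: "nat \<Rightarrow> (nat \<Rightarrow> int) set \<Rightarrow> bool" where
  "simple_om_topes t \<T> \<longleftrightarrow> (\<exists>L. oriented_matroid t L \<and> simple_om t L \<and> \<T> = topes L)"

definition pos_topes :: "(nat \<Rightarrow> int) set \<Rightarrow> nat \<Rightarrow> (nat \<Rightarrow> int) set" where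
  "pos_topes \<T> e = {T\<in>\<T>. T e = 1}"

definition neg_set :: "(nat \<Rightarrow> int) set \<Rightarrow> (nat \<Rightarrow> int) set" where
  "neg_set G = sv_neg ` G"

definition tope_committee :: "nat \<Rightarrow> (nat \<Rightarrow> int) set \<Rightarrow> (nat \<Rightarrow> int) set \<Rightarrow> bool" where
  "tope_committee t \<T> K \<longleftrightarrow> K \<subset> \<T> \<and>
     (\<forall>e\<in>{1..t}. 2 * card {T\<in>K. T e = 1} > card K)"

definition kappa_ring_star :: "nat \<Rightarrow> (nat \<Rightarrow> int) set \<Rightarrow> nat \<Rightarrow> nat" where
  "kappa_ring_star t \<T> k = card {K. tope_committee t \<T> K \<and> card K = k \<and>
                                    (\<forall>T\<in>K. sv_neg T \<notin> K)}"

(* The lattice E(G): unions of nonempty subfamilies, plus a bottom element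
   represented by the empty set (|bottom| = 0). *)
definition union_lattice :: "'a set set \<Rightarrow> 'a set set" where
  "union_lattice \<G> = insert {} {\<Union>\<F> | \<F>. \<F> \<subseteq> \<G> \<and> \<F> \<noteq> {}}"

function mobius :: "'a set set \<Rightarrow> 'a set \<Rightarrow> 'a set \<Rightarrow> int" where
  "mobius S x y =
     (if x = y then 1
      else if x \<subset> y \<and> finite y
        then - (\<Sum>z\<in>{z\<in>S. x \<subseteq> z \<and> z \<subset> y}. mobius S x z)
      else 0)"
  by auto
termination
  by (relation "measure (\<lambda>(S, x, y). card y)") (auto intro: psubset_card_mono)

end

theory Submission
  imports Defs
begin

definition indep :: "('a \<Rightarrow> 'a) \<Rightarrow> 'a set \<Rightarrow> bool" where
  "indep n K \<longleftrightarrow> (\<forall>x\<in>K. n x \<notin> K)"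

definition NN :: "('a \<Rightarrow> 'a) \<Rightarrow> 'a set \<Rightarrow> nat \<Rightarrow> nat" where
  "NN n W k = card {K. K \<subseteq> W \<and> card K = k \<and> indep n K}"

definition ff :: "nat \<Rightarrow> nat \<Rightarrow> nat \<Rightarrow> int" where
  "ff s p k = (\<Sum>j=0..k. int (s choose j) * int (p choose (k-j)) * 2^(k-j))"

lemma ff_0: "ff s p 0 = 1" by (simp add: ff_def)

lemma ff_empty: "ff 0 0 (Suc k) = 0"
  unfolding ff_def by (rule sum.neutral) (auto simp: binomial_eq_0_iff)

lemma ff_s: "ff (Suc s) p (Suc k) = ff s p (Suc k) + ff s p k"
proof -
  have "ff (Suc s) p (Suc k) = int (p choose Suc k) * 2^Suc k +
     (\<Sum>j=0..k. int (Suc s choose Suc j) * int (p choose (k-j)) * 2^(k-j))"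
    unfolding ff_def by (subst sum.atLeast0_atMost_Suc_shift) simp
  also have "\<dots> = int (p choose Suc k) * 2^Suc k +
     (\<Sum>j=0..k. int (s choose Suc j) * int (p choose (k-j)) * 2^(k-j)) +
     (\<Sum>j=0..k. int (s choose j) * int (p choose (k-j)) * 2^(k-j))"
    by (simp add: sum.distrib algebra_simps)
  also have "int (p choose Suc k) * 2^Suc k +
     (\<Sum>j=0..k. int (s choose Suc j) * int (p choose (k-j)) * 2^(k-j)) = ff s p (Suc k)"
    unfolding ff_def by (subst sum.atLeast0_atMost_Suc_shift) simp
  finally show ?thesis by (simp add: ff_def)
qed

lemma ff_p: "ff s (Suc p) (Suc k) = ff s p (Suc k) + 2 * ff s p k"
proof -
  have "ff s (Suc p) (Suc k) = int (s choose Suc k) +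
     (\<Sum>j=0..k. int (s choose j) * int (Suc p choose Suc (k-j)) * 2^Suc (k-j))"
    unfolding ff_def by (subst sum.atLeast0_atMost_Suc) (simp add: Suc_diff_le)
  also have "\<dots> = int (s choose Suc k) +
     (\<Sum>j=0..k. int (s choose j) * int (p choose Suc (k-j)) * 2^Suc (k-j)) +
     2 * (\<Sum>j=0..k. int (s choose j) * int (p choose (k-j)) * 2^(k-j))"
    by (simp add: sum.distrib sum_distrib_left algebra_simps)
  also have "int (s choose Suc k) +
     (\<Sum>j=0..k. int (s choose j) * int (p choose Suc (k-j)) * 2^Suc (k-j)) = ff s p (Suc k)"
    unfolding ff_def by (subst sum.atLeast0_atMost_Suc) (simp add: Suc_diff_le)
  finally show ?thesis by (simp add: ff_def)
qed


lemma NN_0: "finite W \<Longrightarrow> NN n W 0 = 1"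
proof -
  assume f: "finite W"
  have "{K. K \<subseteq> W \<and> card K = 0 \<and> indep n K} = {{}}"
    using f infinite_super by (fastforce simp: indep_def card_eq_0_iff)
  then show ?thesis by (simp add: NN_def)
qed

lemma NN_empty: "NN n {} (Suc k) = 0"
  by (simp add: NN_def)

lemma NN_fin: "finite W \<Longrightarrow> finite {K. K \<subseteq> W \<and> card K = k \<and> indep n K}"
  by (rule finite_subset[of _ "Pow W"]) auto

lemma NN_single:
  assumes f: "finite W" and x: "x \<in> W" "n x \<notin> W" and inv: "\<And>y. n (n y) = y"
  shows "NN n W (Suc k) = NN n (W-{x}) (Suc k) + NN n (W-{x}) k"
proof -
  let ?S = "{K. K \<subseteq> W \<and> card K = Suc k \<and> indep n K}"
  let ?A = "{K. K \<subseteq> W-{x} \<and> card K = Suc k \<and> indep n K}"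
  let ?B = "{K. K \<subseteq> W-{x} \<and> card K = k \<and> indep n K}"
  have fW': "finite (W-{x})" using f by simp
  have "?S = ?A \<union> insert x ` ?B"
  proof (rule set_eqI, rule iffI)
    fix K assume K: "K \<in> ?S"
    show "K \<in> ?A \<union> insert x ` ?B"
    proof (cases "x \<in> K")
      case True
      have fK: "finite K" using K f by (auto intro: finite_subset)
      have "K - {x} \<in> ?B" using K True fK by (auto simp: indep_def)
      moreover have "K = insert x (K - {x})" using True by auto
      ultimately show ?thesis by blast
    next
      case False then show ?thesis using K by auto
    qed
  next
    fix K assume K: "K \<in> ?A \<union> insert x ` ?B"
    show "K \<in> ?S"
    proof (cases "K \<in> ?A")
      case True then show ?thesis by auto
    next
      case False
      then obtain K' where K': "K' \<in> ?B" "K = insert x K'" using K by auto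
      have fK: "finite K'" using K' f by (auto intro: finite_subset)
      have "x \<notin> K'" using K' by auto
      then have "card K = Suc k" using K' fK by simp
      moreover have "indep n K" unfolding indep_def
      proof
        fix y assume y: "y \<in> K"
        show "n y \<notin> K"
        proof
          assume ny: "n y \<in> K"
          show False
          proof (cases "y = x")
            case True then show False using ny x K' by auto
          next
            case False
            then have "y \<in> K'" using y K' by auto
            have "n y \<noteq> x"
            proof
              assume "n y = x" then have "y = n x" using inv by metis
              then show False using \<open>y \<in> K'\<close> K' x by auto
            qed
            then have "n y \<in> K'" using ny K' by auto
            then show False using \<open>y \<in> K'\<close> K' unfolding indep_def by auto
          qed
        qed
      qed
      ultimately show ?thesis using K' x by auto
    qed
  qed
  moreover have "?A \<inter> insert x ` ?B = {}" by auto
  moreover have "inj_on (insert x) ?B"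
  proof (rule inj_onI)
    fix A B assume "A \<in> ?B" "B \<in> ?B" "insert x A = insert x B"
    then have "x \<notin> A" "x \<notin> B" "insert x A = insert x B" by auto
    then show "A = B" by (metis Diff_insert_absorb)
  qed
  ultimately have "card ?S = card ?A + card ?B"
    using NN_fin[OF fW'] by (simp add: card_Un_disjoint card_image)
  then show ?thesis by (simp add: NN_def)
qed


lemma insert_indep:
  assumes K': "K' \<subseteq> W'" "indep n K'" and z: "z \<notin> W'" "n z \<notin> W'" "n z \<noteq> z"
    and inv: "\<And>y. n (n y) = y"
  shows "indep n (insert z K')"
  unfolding indep_def
proof
  fix y assume y: "y \<in> insert z K'"
  show "n y \<notin> insert z K'"
  proof
    assume ny: "n y \<in> insert z K'"
    show False
    proof (cases "y = z")
      case True then show False using ny z K' by auto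
    next
      case False
      then have yK: "y \<in> K'" using y by auto
      have "n y \<noteq> z"
      proof
        assume "n y = z" then have "y = n z" using inv by metis
        then show False using yK K' z by auto
      qed
      then have "n y \<in> K'" using ny by auto
      then show False using yK K' unfolding indep_def by auto
    qed
  qed
qed

lemma inj_insert_on: "\<forall>A\<in>S. x \<notin> A \<Longrightarrow> inj_on (insert x) S"
proof (rule inj_onI)
  fix A B assume "\<forall>A\<in>S. x \<notin> A" "A \<in> S" "B \<in> S" "insert x A = insert x B"
  then have "x \<notin> A" "x \<notin> B" "insert x A = insert x B" by auto
  then show "A = B" by (metis Diff_insert_absorb)
qed

lemma NN_pair:
  assumes f: "finite W" and x: "x \<in> W" "n x \<in> W" "n x \<noteq> x" and inv: "\<And>y. n (n y) = y"
  shows "NN n W (Suc k) = NN n (W-{x, n x}) (Suc k) + 2 * NN n (W-{x, n x}) k"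
proof -
  let ?W = "W-{x, n x}"
  let ?S = "{K. K \<subseteq> W \<and> card K = Suc k \<and> indep n K}"
  let ?A = "{K. K \<subseteq> ?W \<and> card K = Suc k \<and> indep n K}"
  let ?B = "{K. K \<subseteq> ?W \<and> card K = k \<and> indep n K}"
  have fW': "finite ?W" using f by simp
  have nnx: "n (n x) = x" using inv by simp
  have "?S = ?A \<union> (insert x ` ?B \<union> insert (n x) ` ?B)"
  proof (rule set_eqI, rule iffI)
    fix K assume K: "K \<in> ?S"
    have fK: "finite K" using K f by (auto intro: finite_subset)
    show "K \<in> ?A \<union> (insert x ` ?B \<union> insert (n x) ` ?B)"
    proof (cases "x \<in> K")
      case True
      then have "n x \<notin> K" using K by (auto simp: indep_def)
      then have "K - {x} \<in> ?B" using K True fK by (auto simp: indep_def)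
      moreover have "K = insert x (K - {x})" using True by auto
      ultimately show ?thesis by blast
    next
      case False
      show ?thesis
      proof (cases "n x \<in> K")
        case True
        then have "K - {n x} \<in> ?B" using K False fK by (auto simp: indep_def)
        moreover have "K = insert (n x) (K - {n x})" using True by auto
        ultimately show ?thesis by blast
      next
        case False
        then show ?thesis using K \<open>x \<notin> K\<close> by auto
      qed
    qed
  next
    fix K assume K: "K \<in> ?A \<union> (insert x ` ?B \<union> insert (n x) ` ?B)"
    show "K \<in> ?S"
    proof (cases "K \<in> ?A")
      case True then show ?thesis by auto
    next
      case False
      then obtain K' z where K': "K' \<in> ?B" "K = insert z K'" and z: "z = x \<or> z = n x"
        using K by auto
      have fK: "finite K'" using K' f by (auto intro: finite_subset)
      have zW: "z \<notin> ?W" "n z \<notin> ?W" "n z \<noteq> z" "z \<in> W" using z x nnx by auto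
      have "z \<notin> K'" using K' zW by auto
      then have "card K = Suc k" using K' fK by simp
      moreover have "indep n K" using insert_indep[of K' ?W n z] K' zW inv by auto
      ultimately show ?thesis using K' zW by auto
    qed
  qed
  moreover have "?A \<inter> (insert x ` ?B \<union> insert (n x) ` ?B) = {}" by auto
  moreover have "insert x ` ?B \<inter> insert (n x) ` ?B = {}" using x by auto
  moreover have "inj_on (insert x) ?B" by (rule inj_insert_on) auto
  moreover have "inj_on (insert (n x)) ?B" by (rule inj_insert_on) auto
  ultimately have "card ?S = card ?A + 2 * card ?B"
    using NN_fin[OF fW'] by (simp add: card_Un_disjoint card_image)
  then show ?thesis by (simp add: NN_def)
qed


lemma NN_formula:
  assumes "finite W" and inv: "\<And>y. n (n y) = y" and fp: "\<forall>x\<in>W. n x \<noteq> x"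
  shows "int (NN n W k) = ff (card {x\<in>W. n x \<notin> W}) (card {x\<in>W. n x \<in> W} div 2) k"
  using assms(1) fp
proof (induction "card W" arbitrary: W k rule: less_induct)
  case less
  show ?case
  proof (cases k)
    case 0 then show ?thesis using less.prems by (simp add: NN_0 ff_0)
  next
    case (Suc k')
    show ?thesis
    proof (cases "W = {}")
      case True then show ?thesis using Suc by (simp add: NN_empty ff_empty)
    next
      case False
      show ?thesis
      proof (cases "\<exists>x\<in>W. n x \<notin> W")
        case True
        then obtain x where x: "x \<in> W" "n x \<notin> W" by blast
        let ?W = "W - {x}"
        have c: "card ?W < card W" using x less.prems by (meson card_Diff1_less)
        have s: "{y\<in>?W. n y \<notin> ?W} = {y\<in>W. n y \<notin> W} - {x}"
          using x inv by auto
        have p: "{y\<in>?W. n y \<in> ?W} = {y\<in>W. n y \<in> W}"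
          using x inv by auto
        have cs: "card {y\<in>W. n y \<notin> W} = Suc (card ({y\<in>W. n y \<notin> W} - {x}))"
          using x less.prems by (subst card_Suc_Diff1) auto
        have IH: "\<And>j. int (NN n ?W j) = ff (card {y\<in>?W. n y \<notin> ?W}) (card {y\<in>?W. n y \<in> ?W} div 2) j"
          using less.hyps[OF c] less.prems by auto
        show ?thesis
          unfolding Suc NN_single[OF less.prems(1) x inv] cs ff_s
          using IH[of k'] IH[of "Suc k'"] s p by simp
      next
        case False
        then obtain x where x: "x \<in> W" "n x \<in> W" using \<open>W \<noteq> {}\<close> by blast
        have nx: "n x \<noteq> x" using x less.prems by auto
        let ?W = "W - {x, n x}"
        have c: "card ?W < card W"
          by (rule psubset_card_mono[OF less.prems(1)]) (use x in auto)
        have s1: "{y\<in>?W. n y \<notin> ?W} = {}"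
        proof -
          have "\<And>y. y \<in> ?W \<Longrightarrow> n y \<in> ?W"
          proof -
            fix y assume y: "y \<in> ?W"
            have "n y \<in> W" using False y by auto
            moreover have "n y \<noteq> x" using y inv by (metis Diff_iff insertCI)
            moreover have "n y \<noteq> n x" using y inv by (metis Diff_iff insertCI)
            ultimately show "n y \<in> ?W" by auto
          qed
          then show ?thesis by auto
        qed
        have s2: "{y\<in>W. n y \<notin> W} = {}" using False by auto
        have p: "{y\<in>?W. n y \<in> ?W} = {y\<in>W. n y \<in> W} - {x, n x}"
        proof -
          have "\<And>y. y \<in> ?W \<Longrightarrow> n y \<in> ?W"
          proof -
            fix y assume y: "y \<in> ?W"
            have "n y \<in> W" using False y by auto
            moreover have "n y \<noteq> x" using y inv by (metis Diff_iff insertCI)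
            moreover have "n y \<noteq> n x" using y inv by (metis Diff_iff insertCI)
            ultimately show "n y \<in> ?W" by auto
          qed
          then show ?thesis using False by auto
        qed
        have cp: "card {y\<in>W. n y \<in> W} = card ({y\<in>W. n y \<in> W} - {x, n x}) + 2"
        proof -
          have "{x, n x} \<subseteq> {y\<in>W. n y \<in> W}" using x inv by auto
          moreover have fP: "finite {y\<in>W. n y \<in> W}" using less.prems(1) by simp
          ultimately have "card {x, n x} \<le> card {y\<in>W. n y \<in> W}" by (rule card_mono[rotated])
          moreover have "card {x, n x} = 2" using nx by simp
          moreover have "card ({y\<in>W. n y \<in> W} - {x, n x}) = card {y\<in>W. n y \<in> W} - card {x, n x}"
            using \<open>{x, n x} \<subseteq> _\<close> fP by (simp add: card_Diff_subset)
          ultimately show ?thesis by linarith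
        qed
        have cp2: "card {y\<in>W. n y \<in> W} div 2 = Suc (card ({y\<in>W. n y \<in> W} - {x, n x}) div 2)"
          using cp by simp
        have IH: "\<And>j. int (NN n ?W j) = ff (card {y\<in>?W. n y \<notin> ?W}) (card {y\<in>?W. n y \<in> ?W} div 2) j"
          using less.hyps[OF c] less.prems by auto
        show ?thesis
          unfolding Suc NN_pair[OF less.prems(1) x nx inv] cp2 ff_p s2
          using IH[of k'] IH[of "Suc k'"] unfolding s1 p by simp
      qed
    qed
  qed
qed


lemma union_lattice_sub: "\<forall>A\<in>P. A \<subseteq> U \<Longrightarrow> union_lattice P \<subseteq> Pow U"
  unfolding union_lattice_def by auto

lemma mob_sum:
  assumes fU: "finite U" and P: "\<forall>A\<in>P. A \<subseteq> U \<and> A \<noteq> {}"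
  shows "(\<Sum>G\<in>{G\<in>union_lattice P. G \<subseteq> S}. mobius (union_lattice P) {} G)
         = (if \<exists>A\<in>P. A \<subseteq> S then 0 else 1)"
proof -
  let ?L = "union_lattice P"
  have LU: "?L \<subseteq> Pow U" using union_lattice_sub P by blast
  have fL: "finite ?L" using LU fU by (meson finite_Pow_iff finite_subset)
  let ?F = "{A\<in>P. A \<subseteq> S}"
  let ?J = "\<Union>?F"
  have eq: "{G\<in>?L. G \<subseteq> S} = {G\<in>?L. G \<subseteq> ?J}"
    unfolding union_lattice_def by auto
  show ?thesis
  proof (cases "\<exists>A\<in>P. A \<subseteq> S")
    case False
    then have "{G\<in>?L. G \<subseteq> S} = {{}}" unfolding eq unfolding union_lattice_def by auto
    then show ?thesis using False by simp
  next
    case True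
    then obtain A where A: "A \<in> P" "A \<subseteq> S" by blast
    have JL: "?J \<in> ?L" using A unfolding union_lattice_def by blast
    have Jne: "?J \<noteq> {}" using A P by blast
    have fJ: "finite ?J" using JL LU fU by (meson PowD finite_subset subsetD)
    have split: "{G\<in>?L. G \<subseteq> ?J} = insert ?J {z\<in>?L. {} \<subseteq> z \<and> z \<subset> ?J}" using JL by auto
    have m: "mobius ?L {} ?J = - (\<Sum>z\<in>{z\<in>?L. {} \<subseteq> z \<and> z \<subset> ?J}. mobius ?L {} z)"
      using Jne fJ by (subst mobius.simps) auto
    have "(\<Sum>G\<in>{G\<in>?L. G \<subseteq> S}. mobius ?L {} G) = 0"
      unfolding eq split using fL m by (subst sum.insert) auto
    then show ?thesis using True by simp
  qed
qed


lemma sv_neg_neg[simp]: "sv_neg (sv_neg X) = X" by (simp add: sv_neg_def)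

lemma sv_neg_inj: "inj sv_neg" by (metis injI sv_neg_neg)

lemma topes_facts:
  assumes "simple_om_topes t T"
  shows "finite T" "\<And>X e. X \<in> T \<Longrightarrow> e \<in> {1..t} \<Longrightarrow> X e = 1 \<or> X e = -1"
    "\<And>X. X \<in> T \<Longrightarrow> sv_neg X \<in> T"
proof -
  obtain L where om: "oriented_matroid t L" and s: "simple_om t L" and T: "T = topes L"
    using assms unfolding simple_om_topes_def by blast
  have sv: "\<And>X. X \<in> T \<Longrightarrow> sign_vector t X" using om T unfolding oriented_matroid_def topes_def by auto
  have "T \<subseteq> {f. \<forall>x. (x \<in> {1..t} \<longrightarrow> f x \<in> {-1,0,1}) \<and> (x \<notin> {1..t} \<longrightarrow> f x = 0)}"
    using sv unfolding sign_vector_def by auto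
  then show "finite T" by (rule finite_subset) (rule finite_set_of_finite_funs; simp)
  show "\<And>X e. X \<in> T \<Longrightarrow> e \<in> {1..t} \<Longrightarrow> X e = 1 \<or> X e = -1"
  proof -
    fix X e assume X: "X \<in> T" and e: "e \<in> {1..t}"
    obtain Y where Y: "Y \<in> L" "Y e \<noteq> 0" using s e unfolding simple_om_def by blast
    have XL: "X \<in> L" using X T topes_def by auto
    have cL: "sv_comp X Y \<in> L" using om XL Y unfolding oriented_matroid_def by blast
    have "sv_conf_le X (sv_comp X Y)" unfolding sv_conf_le_def sv_comp_def by auto
    then have "sv_comp X Y = X" using X T cL unfolding topes_def by auto
    then have "X e \<noteq> 0" using Y by (metis sv_comp_def)
    moreover have "X e \<in> {-1,0,1}" using sv[OF X] unfolding sign_vector_def by auto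
    ultimately show "X e = 1 \<or> X e = -1" by auto
  qed
  show "\<And>X. X \<in> T \<Longrightarrow> sv_neg X \<in> T"
  proof -
    fix X assume X: "X \<in> T"
    have XL: "X \<in> L" using X T topes_def by auto
    have nL: "sv_neg X \<in> L" using om XL unfolding oriented_matroid_def by blast
    have "\<forall>Y\<in>L. sv_conf_le (sv_neg X) Y \<longrightarrow> Y = sv_neg X"
    proof (intro ballI impI)
      fix Y assume Y: "Y \<in> L" "sv_conf_le (sv_neg X) Y"
      have "sv_neg Y \<in> L" using om Y unfolding oriented_matroid_def by blast
      moreover have "sv_conf_le X (sv_neg Y)" using Y(2) unfolding sv_conf_le_def sv_neg_def
        by (metis add.inverse_inverse neg_equal_0_iff_equal)
      ultimately have "sv_neg Y = X" using X T unfolding topes_def by auto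
      then show "Y = sv_neg X" by (metis sv_neg_neg)
    qed
    then show "sv_neg X \<in> T" using nL T unfolding topes_def by auto
  qed
qed


lemma ff_zero_s: "ff 0 p k = int (p choose k) * 2 ^ k"
proof (cases k)
  case 0 then show ?thesis by (simp add: ff_def)
next
  case (Suc k') then show ?thesis unfolding ff_def Suc
    by (subst sum.atLeast0_atMost_Suc_shift) simp
qed

lemma count_G:
  assumes fT: "finite T" and neg: "\<And>X. X \<in> T \<Longrightarrow> sv_neg X \<in> T"
    and nfp: "\<forall>X\<in>T. sv_neg X \<noteq> X" and G: "G \<subseteq> T"
  shows "int (card {K. (K \<subseteq> T \<and> card K = k \<and> indep sv_neg K) \<and> G \<subseteq> T - K}) =
    ff (card (G \<union> neg_set G) - card G) ((card T - card (G \<union> neg_set G)) div 2) k"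
proof -
  have e1: "{K. (K \<subseteq> T \<and> card K = k \<and> indep sv_neg K) \<and> G \<subseteq> T - K} =
     {K. K \<subseteq> T - G \<and> card K = k \<and> indep sv_neg K}" using G by auto
  have nG: "neg_set G \<subseteq> T" using G neg unfolding neg_set_def by auto
  have s: "{x\<in>T-G. sv_neg x \<notin> T-G} = neg_set G - G"
  proof (rule set_eqI, rule iffI)
    fix x assume "x \<in> {x\<in>T-G. sv_neg x \<notin> T-G}"
    then have "x \<in> T" "x \<notin> G" "sv_neg x \<in> G" using neg by auto
    then show "x \<in> neg_set G - G" unfolding neg_set_def by (metis DiffI image_eqI sv_neg_neg)
  next
    fix x assume "x \<in> neg_set G - G"
    then obtain y where "y \<in> G" "x = sv_neg y" "x \<notin> G" unfolding neg_set_def by auto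
    then show "x \<in> {x\<in>T-G. sv_neg x \<notin> T-G}" using nG neg_set_def G by auto
  qed
  have p: "{x\<in>T-G. sv_neg x \<in> T-G} = T - (G \<union> neg_set G)"
  proof (rule set_eqI, rule iffI)
    fix x assume "x \<in> {x\<in>T-G. sv_neg x \<in> T-G}"
    then have "x \<in> T" "x \<notin> G" "sv_neg x \<notin> G" by auto
    then show "x \<in> T - (G \<union> neg_set G)" unfolding neg_set_def by (metis DiffI UnE imageE sv_neg_neg)
  next
    fix x assume x: "x \<in> T - (G \<union> neg_set G)"
    then have "sv_neg x \<notin> G" unfolding neg_set_def by (metis DiffD2 UnCI image_eqI sv_neg_neg)
    then show "x \<in> {x\<in>T-G. sv_neg x \<in> T-G}" using x neg by auto
  qed
  have fG: "finite G" using G fT by (rule finite_subset)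
  have fnG: "finite (neg_set G)" using nG fT by (rule finite_subset)
  have c1: "card (neg_set G - G) = card (G \<union> neg_set G) - card G"
  proof -
    have "G \<union> neg_set G = G \<union> (neg_set G - G)" by auto
    moreover have "card (G \<union> (neg_set G - G)) = card G + card (neg_set G - G)"
      using fG fnG by (intro card_Un_disjoint) auto
    ultimately have "card (G \<union> neg_set G) = card G + card (neg_set G - G)" by simp
    then show ?thesis by simp
  qed
  have c2: "card (T - (G \<union> neg_set G)) = card T - card (G \<union> neg_set G)"
    using G nG fT by (subst card_Diff_subset) (auto intro: finite_subset)
  have "int (NN sv_neg (T - G) k) = ff (card {x\<in>T-G. sv_neg x \<notin> T-G}) (card {x\<in>T-G. sv_neg x \<in> T-G} div 2) k"
    by (rule NN_formula) (use fT nfp in auto)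
  then show ?thesis unfolding e1 NN_def[symmetric] s p c1 c2 .
qed


lemma card_pos:
  assumes fT: "finite T" and neg: "\<And>X. X \<in> T \<Longrightarrow> sv_neg X \<in> T"
    and pm: "\<And>X. X \<in> T \<Longrightarrow> X e = 1 \<or> X e = -1"
  shows "card T = 2 * card (pos_topes T e)"
proof -
  have "T = pos_topes T e \<union> sv_neg ` pos_topes T e"
  proof (rule set_eqI, rule iffI)
    fix X assume X: "X \<in> T"
    show "X \<in> pos_topes T e \<union> sv_neg ` pos_topes T e"
    proof (cases "X e = 1")
      case True then show ?thesis using X by (simp add: pos_topes_def)
    next
      case False
      then have "sv_neg X \<in> pos_topes T e" using pm[OF X] neg[OF X] by (simp add: pos_topes_def sv_neg_def)
      then show ?thesis by (metis UnI2 image_eqI sv_neg_neg)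
    qed
  next
    fix X assume "X \<in> pos_topes T e \<union> sv_neg ` pos_topes T e"
    then show "X \<in> T" using neg by (auto simp: pos_topes_def)
  qed
  moreover have "pos_topes T e \<inter> sv_neg ` pos_topes T e = {}"
    by (auto simp: pos_topes_def sv_neg_def)
  moreover have "finite (pos_topes T e)" using fT by (simp add: pos_topes_def)
  ultimately have "card T = card (pos_topes T e) + card (sv_neg ` pos_topes T e)"
    by (metis card_Un_disjoint finite_imageI)
  moreover have "card (sv_neg ` pos_topes T e) = card (pos_topes T e)"
    using sv_neg_inj by (simp add: card_image inj_on_subset)
  ultimately show ?thesis by simp
qed

lemma arith1: "(c::nat) \<le> k \<Longrightarrow> c \<le> m \<Longrightarrow> k \<le> m \<Longrightarrow> (k < 2*c) \<longleftrightarrow> \<not> ((2*m - k + 1) div 2 \<le> m - c)"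
  by linarith

theorem mainTheorem6:
  fixes t k :: nat and \<T> :: "(nat \<Rightarrow> int) set"
  assumes "t \<ge> 1"
    and "simple_om_topes t \<T>"
    and "1 \<le> k" and "2 * k \<le> card \<T>"
  defines "h \<equiv> (card \<T> - k + 1) div 2"
  defines "\<P> \<equiv> {A. \<exists>e\<in>{1..t}. A \<subseteq> pos_topes \<T> e \<and> card A = h}"
  shows "int (kappa_ring_star t \<T> k) =
           int ((card \<T> div 2) choose k) * 2 ^ k
         + (\<Sum>G\<in>{G\<in>union_lattice \<P>. 0 < card G \<and> card G \<le> card \<T> - k}.
              mobius (union_lattice \<P>) {} G *
              (\<Sum>j=0..k. int ((card (G \<union> neg_set G) - card G) choose j) *
                  int (((card \<T> - card (G \<union> neg_set G)) div 2) choose (k - j)) *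
                  2 ^ (k - j)))"
proof -
  note tf = topes_facts[OF assms(2)]
  have fT: "finite \<T>" by (rule tf(1))
  have pm: "\<And>X e. X \<in> \<T> \<Longrightarrow> e \<in> {1..t} \<Longrightarrow> X e = 1 \<or> X e = -1" by (rule tf(2))
  have neg: "\<And>X. X \<in> \<T> \<Longrightarrow> sv_neg X \<in> \<T>" by (rule tf(3))
  have nfp: "\<forall>X\<in>\<T>. sv_neg X \<noteq> X"
  proof
    fix X assume "X \<in> \<T>"
    then have "X 1 = 1 \<or> X 1 = -1" using pm assms(1) by auto
    then have "sv_neg X 1 \<noteq> X 1" by (auto simp: sv_neg_def)
    then show "sv_neg X \<noteq> X" by metis
  qed
  define m where "m = card \<T> div 2"
  have cpos: "\<And>e. e \<in> {1..t} \<Longrightarrow> card \<T> = 2 * card (pos_topes \<T> e)"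
    by (rule card_pos[OF fT neg]) (use pm in auto)
  have "card \<T> = 2 * card (pos_topes \<T> 1)" using cpos assms(1) by simp
  then have cT: "card \<T> = 2 * m" unfolding m_def by simp
  have km: "k \<le> m" using assms(4) cT by simp
  have h1: "h \<ge> 1" unfolding h_def using km cT assms(3) by simp
  have Psub: "\<forall>A\<in>\<P>. A \<subseteq> \<T> \<and> A \<noteq> {}"
  proof
    fix A assume "A \<in> \<P>"
    then obtain e where "A \<subseteq> pos_topes \<T> e" "card A = h" unfolding \<P>_def by blast
    then show "A \<subseteq> \<T> \<and> A \<noteq> {}" using h1 unfolding pos_topes_def by auto
  qed
  let ?L = "union_lattice \<P>"
  let ?mu = "\<lambda>G. mobius ?L {} G"
  define KK where "KK = {K. K \<subseteq> \<T> \<and> card K = k \<and> indep sv_neg K}"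
  have fKK: "finite KK" unfolding KK_def by (rule finite_subset[of _ "Pow \<T>"]) (use fT in auto)
  have LU: "?L \<subseteq> Pow \<T>" using union_lattice_sub Psub by blast
  have fL: "finite ?L" using LU fT by (meson finite_Pow_iff finite_subset)
  have key: "(k < 2 * card {X\<in>K. X e = 1}) \<longleftrightarrow> \<not> (\<exists>A. A \<subseteq> pos_topes \<T> e \<and> card A = h \<and> A \<subseteq> \<T> - K)"
    if K: "K \<subseteq> \<T>" "card K = k" and e: "e \<in> {1..t}" for K e
  proof -
    let ?c = "card {X\<in>K. X e = 1}"
    let ?Q = "pos_topes \<T> e - K"
    have fQ: "finite ?Q" using fT unfolding pos_topes_def by simp
    have fK: "finite K" using K fT by (meson finite_subset)
    have int: "pos_topes \<T> e \<inter> K = {X\<in>K. X e = 1}" using K unfolding pos_topes_def by auto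
    have cQ: "card ?Q = card (pos_topes \<T> e) - ?c"
      using card_Diff_subset_Int[of "pos_topes \<T> e" K] fK int by simp
    have cpe: "card (pos_topes \<T> e) = m" using cpos[OF e] cT by simp
    have "?c \<le> card K" by (rule card_mono[OF fK]) auto
    then have cle: "?c \<le> k" using K by simp
    have "?c \<le> card (pos_topes \<T> e)" 
      by (rule card_mono) (use fT int in \<open>auto simp: pos_topes_def\<close>)
    then have cle2: "?c \<le> m" using cpe by simp
    have ex: "(\<exists>A. A \<subseteq> pos_topes \<T> e \<and> card A = h \<and> A \<subseteq> \<T> - K) \<longleftrightarrow> h \<le> card ?Q"
    proof
      assume "\<exists>A. A \<subseteq> pos_topes \<T> e \<and> card A = h \<and> A \<subseteq> \<T> - K"
      then obtain A where A: "A \<subseteq> ?Q" "card A = h" by blast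
      then show "h \<le> card ?Q" using fQ card_mono by metis
    next
      assume "h \<le> card ?Q"
      then obtain A where "A \<subseteq> ?Q" "card A = h" using obtain_subset_with_card_n by metis
      then show "\<exists>A. A \<subseteq> pos_topes \<T> e \<and> card A = h \<and> A \<subseteq> \<T> - K"
        unfolding pos_topes_def by auto
    qed
    have "(k < 2 * ?c) \<longleftrightarrow> \<not> (h \<le> card ?Q)"
      unfolding cQ cpe h_def cT using arith1[OF cle cle2 km] by simp
    then show ?thesis using ex by blast
  qed
  have S1: "{K. tope_committee t \<T> K \<and> card K = k \<and> (\<forall>T\<in>K. sv_neg T \<notin> K)}
      = {K\<in>KK. \<not> (\<exists>A\<in>\<P>. A \<subseteq> \<T> - K)}"
  proof (rule set_eqI, rule iffI)
    fix K assume K: "K \<in> {K. tope_committee t \<T> K \<and> card K = k \<and> (\<forall>T\<in>K. sv_neg T \<notin> K)}"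
    then have Ks: "K \<subseteq> \<T>" "card K = k" and ind: "indep sv_neg K"
      unfolding tope_committee_def indep_def by auto
    have tc: "\<forall>e\<in>{1..t}. k < 2 * card {T\<in>K. T e = 1}"
      using K unfolding tope_committee_def by auto
    have "\<not> (\<exists>A\<in>\<P>. A \<subseteq> \<T> - K)"
    proof
      assume "\<exists>A\<in>\<P>. A \<subseteq> \<T> - K"
      then obtain A e where "e \<in> {1..t}" "A \<subseteq> pos_topes \<T> e" "card A = h" "A \<subseteq> \<T> - K"
        unfolding \<P>_def by blast
      then show False using key[OF Ks] tc by blast
    qed
    then show "K \<in> {K\<in>KK. \<not> (\<exists>A\<in>\<P>. A \<subseteq> \<T> - K)}" using Ks ind unfolding KK_def by auto
  next
    fix K assume K: "K \<in> {K\<in>KK. \<not> (\<exists>A\<in>\<P>. A \<subseteq> \<T> - K)}"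
    then have Ks: "K \<subseteq> \<T>" "card K = k" and ind: "indep sv_neg K" and nA: "\<not> (\<exists>A\<in>\<P>. A \<subseteq> \<T> - K)"
      unfolding KK_def by auto
    have "k < card \<T>" using cT km assms(3) by simp
    then have "K \<noteq> \<T>" using Ks by auto
    then have "K \<subset> \<T>" using Ks by auto
    moreover have "\<forall>e\<in>{1..t}. k < 2 * card {T\<in>K. T e = 1}"
    proof
      fix e assume e: "e \<in> {1..t}"
      show "k < 2 * card {T\<in>K. T e = 1}"
        unfolding key[OF Ks e] using nA e unfolding \<P>_def by blast
    qed
    ultimately show "K \<in> {K. tope_committee t \<T> K \<and> card K = k \<and> (\<forall>T\<in>K. sv_neg T \<notin> K)}"
      using Ks ind unfolding tope_committee_def indep_def by auto
  qed
  define Fg where "Fg G = ff (card (G \<union> neg_set G) - card G) ((card \<T> - card (G \<union> neg_set G)) div 2) k" for G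
  have cntG: "int (card {K\<in>KK. G \<subseteq> \<T> - K}) = Fg G" if "G \<in> ?L" for G
  proof -
    have "G \<subseteq> \<T>" using that LU by auto
    have "{K\<in>KK. G \<subseteq> \<T> - K} = {K. (K \<subseteq> \<T> \<and> card K = k \<and> indep sv_neg K) \<and> G \<subseteq> \<T> - K}"
      unfolding KK_def by auto
    then show ?thesis unfolding Fg_def using count_G[OF fT neg nfp \<open>G \<subseteq> \<T>\<close>] by simp
  qed
  have "int (kappa_ring_star t \<T> k) = int (card {K\<in>KK. \<not> (\<exists>A\<in>\<P>. A \<subseteq> \<T> - K)})"
    unfolding kappa_ring_star_def S1 ..
  also have "\<dots> = (\<Sum>K\<in>KK. (if \<exists>A\<in>\<P>. A \<subseteq> \<T> - K then 0 else 1::int))"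
  proof -
    have "int (card {K\<in>KK. \<not> (\<exists>A\<in>\<P>. A \<subseteq> \<T> - K)}) = (\<Sum>K\<in>{K\<in>KK. \<not> (\<exists>A\<in>\<P>. A \<subseteq> \<T> - K)}. 1::int)"
      by simp
    also have "\<dots> = (\<Sum>K\<in>KK. if \<not> (\<exists>A\<in>\<P>. A \<subseteq> \<T> - K) then 1 else 0)"
      by (rule sum.inter_filter[OF fKK])
    finally show ?thesis by (simp only: if_not_P) (rule trans, rule sum.cong, auto)
  qed
  also have "\<dots> = (\<Sum>K\<in>KK. \<Sum>G\<in>{G\<in>?L. G \<subseteq> \<T> - K}. ?mu G)"
    using mob_sum[OF fT Psub] by simp
  also have "\<dots> = (\<Sum>G\<in>?L. \<Sum>K\<in>{K\<in>KK. G \<subseteq> \<T> - K}. ?mu G)"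
    by (rule sum.swap_restrict[OF fKK fL])
  also have "\<dots> = (\<Sum>G\<in>?L. ?mu G * Fg G)"
    by (rule sum.cong) (auto simp: cntG[symmetric] mult.commute)
  also have "\<dots> = ?mu {} * Fg {} + (\<Sum>G\<in>?L - {{}}. ?mu G * Fg G)"
  proof -
    have "{} \<in> ?L" unfolding union_lattice_def by simp
    then show ?thesis using fL by (simp add: sum.remove)
  qed
  also have "?mu {} * Fg {} = int (m choose k) * 2 ^ k"
    by (simp add: Fg_def neg_set_def ff_zero_s m_def)
  also have "(\<Sum>G\<in>?L - {{}}. ?mu G * Fg G) =
      (\<Sum>G\<in>{G\<in>?L. 0 < card G \<and> card G \<le> card \<T> - k}. ?mu G * Fg G)"
  proof (rule sum.mono_neutral_right)
    show "finite (?L - {{}})" using fL by simp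
    show "{G\<in>?L. 0 < card G \<and> card G \<le> card \<T> - k} \<subseteq> ?L - {{}}" by auto
    show "\<forall>G\<in>?L - {{}} - {G\<in>?L. 0 < card G \<and> card G \<le> card \<T> - k}. ?mu G * Fg G = 0"
    proof
      fix G assume G: "G \<in> ?L - {{}} - {G\<in>?L. 0 < card G \<and> card G \<le> card \<T> - k}"
      have GT: "G \<subseteq> \<T>" using G LU by auto
      have fG: "finite G" using GT fT by (rule finite_subset)
      have "card G > 0" using G fG by auto
      then have big: "card G > card \<T> - k" using G by auto
      have emp: "{K\<in>KK. G \<subseteq> \<T> - K} = {}"
      proof (rule ccontr)
        assume "{K\<in>KK. G \<subseteq> \<T> - K} \<noteq> {}"
        then obtain K where K: "K \<in> KK" "G \<subseteq> \<T> - K" by blast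
        then have "K \<subseteq> \<T> - G" "card K = k" unfolding KK_def by auto
        then have "k \<le> card (\<T> - G)" using fT by (metis card_mono finite_Diff)
        moreover have "card (\<T> - G) = card \<T> - card G" using GT fG by (simp add: card_Diff_subset)
        moreover have "card G \<le> card \<T>" using GT fT by (simp add: card_mono)
        ultimately show False using big by linarith
      qed
      have "G \<in> ?L" using G by blast
      then have "Fg G = int (card {K\<in>KK. G \<subseteq> \<T> - K})" using cntG by simp
      then have "Fg G = 0" unfolding emp by simp
      then show "?mu G * Fg G = 0" by simp
    qed
  qed
  finally show ?thesis unfolding Fg_def ff_def m_def .
qed

end
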